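(* Let $d>1$ and $\mathbf{a}=(a_0,\dots,a_{d+1})\in\mathbb{Z}^{d+2}$ with $\sum a_i=0$, all $a_i\neq0$, $a_i>0$ for $i\le p$ and $a_i<0$ for $i>p$, where $p\ge1$. For every $t\in\mathbb{C}^*$, the set of critical values of $\Psi^t:F^\circ_t\to P_1$ equals $W_{\mathbf{c}}^{-1}\big((-1)^{c_2}t/q_{\mathbf{b}}\big)$.
   Context: $P_m=\{[Z_0:\dots:Z_{m+1}]\in\mathbb{P}^{m+1}:\sum Z_i=0,\ Z_i\neq0\}$ and, for $\mathbf{e}\in\mathbb{Z}^{m+2}$, $W_{\mathbf{e}}=\prod Z_i^{e_i}:P_m\to\mathbb{C}^*$. $\mathbf{b}=(b_0,\dots,b_d)=(a_0+a_1,a_2,\dots,a_{d+1})$, $\mathbf{c}=(c_0,c_1,c_2)=(a_0,a_1,-a_0-a_1)$, $q_{\mathbf{b}}=\prod_{i=0}^d b_i^{b_i}$ (the unique critical value of $W_{\mathbf{b}}$). $F^\circ_t=W_{\mathbf{a}}^{-1}(t)\cap\{Z_0+Z_1\neq0\}\subset P_d$ and $\Psi^t(Z)=[Z_0:Z_1:-Z_0-Z_1]\in P_1$. *)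

theory Defs
  imports "HOL-Analysis.Analysis"
begin

text \<open>Points of P^{m+1} are represented by vectors z :: nat => complex supported on
  indices 0..m+1; a projective point is the set of nonzero multiples of a representative.\<close>

definition proj_pt :: "(nat \<Rightarrow> complex) \<Rightarrow> (nat \<Rightarrow> complex) set" where
  "proj_pt z = {w. \<exists>c. c \<noteq> 0 \<and> w = (\<lambda>i. c * z i)}"

definition Pvecs :: "nat \<Rightarrow> (nat \<Rightarrow> complex) set" where
  "Pvecs m = {z. (\<forall>i\<le>m+1. z i \<noteq> 0) \<and> (\<forall>i>m+1. z i = 0) \<and> (\<Sum>i\<le>m+1. z i) = 0}"

definition Pspace :: "nat \<Rightarrow> (nat \<Rightarrow> complex) set set" where
  "Pspace m = proj_pt ` Pvecs m"

text \<open>W_e on representatives, and on projective points (well defined when the e_i sum to 0).\<close>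
definition Wvec :: "nat \<Rightarrow> (nat \<Rightarrow> int) \<Rightarrow> (nat \<Rightarrow> complex) \<Rightarrow> complex" where
  "Wvec m e z = (\<Prod>i\<le>m+1. z i powi e i)"

definition W :: "nat \<Rightarrow> (nat \<Rightarrow> int) \<Rightarrow> (nat \<Rightarrow> complex) set \<Rightarrow> complex" where
  "W m e P = (THE w. \<exists>z\<in>Pvecs m. P = proj_pt z \<and> w = Wvec m e z)"

definition Winv :: "nat \<Rightarrow> (nat \<Rightarrow> int) \<Rightarrow> complex \<Rightarrow> (nat \<Rightarrow> complex) set set" where
  "Winv m e s = {P \<in> Pspace m. W m e P = s}"

definition Fo :: "nat \<Rightarrow> (nat \<Rightarrow> int) \<Rightarrow> complex \<Rightarrow> (nat \<Rightarrow> complex) set set" where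
  "Fo d a t = {P \<in> Winv d a t. \<exists>z\<in>Pvecs d. P = proj_pt z \<and> z 0 + z 1 \<noteq> 0}"

definition psi_vec :: "(nat \<Rightarrow> complex) \<Rightarrow> (nat \<Rightarrow> complex)" where
  "psi_vec z = (\<lambda>i. if i = 0 then z 0 else if i = 1 then z 1
                   else if i = 2 then - (z 0 + z 1) else 0)"

definition dirD :: "((nat \<Rightarrow> complex) \<Rightarrow> complex) \<Rightarrow> (nat \<Rightarrow> complex) \<Rightarrow> (nat \<Rightarrow> complex) \<Rightarrow> complex" where
  "dirD g z v = deriv (\<lambda>s. g (\<lambda>i. z i + s * v i)) 0"

definition tangent :: "nat \<Rightarrow> (nat \<Rightarrow> complex) \<Rightarrow> bool" where
  "tangent d v \<longleftrightarrow> (\<forall>i>d+1. v i = 0) \<and> (\<Sum>i\<le>d+1. v i) = 0"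

text \<open>[z] is a critical point of Psi^t restricted to the fibre F_t: the differentials of
  Psi (in the global affine coordinate Z_1/Z_0 of P_1) and of W_a are linearly dependent on the
  tangent space of P_d at [z].\<close>
definition crit_point :: "nat \<Rightarrow> (nat \<Rightarrow> int) \<Rightarrow> (nat \<Rightarrow> complex) \<Rightarrow> bool" where
  "crit_point d a z \<longleftrightarrow>
     (\<exists>l m. (l, m) \<noteq> (0, 0) \<and>
        (\<forall>v. tangent d v \<longrightarrow>
           l * dirD (\<lambda>w. w 1 / w 0) z v + m * dirD (Wvec d a) z v = 0))"

definition crit_values :: "nat \<Rightarrow> (nat \<Rightarrow> int) \<Rightarrow> complex \<Rightarrow> (nat \<Rightarrow> complex) set set" where
  "crit_values d a t = {proj_pt (psi_vec z) | z. z \<in> Pvecs d \<and> proj_pt z \<in> Fo d a t \<and> crit_point d a z}"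

definition bvec :: "(nat \<Rightarrow> int) \<Rightarrow> nat \<Rightarrow> int" where
  "bvec a i = (if i = 0 then a 0 + a 1 else a (i + 1))"

definition cvec :: "(nat \<Rightarrow> int) \<Rightarrow> nat \<Rightarrow> int" where
  "cvec a i = (if i = 0 then a 0 else if i = 1 then a 1 else if i = 2 then - a 0 - a 1 else 0)"

definition qb :: "nat \<Rightarrow> (nat \<Rightarrow> int) \<Rightarrow> complex" where
  "qb d b = (\<Prod>i\<le>d. (of_int (b i) :: complex) powi b i)"

end

theory Submission
  imports Defs
begin

lemma proj_pt_scale: "(c::complex) \<noteq> 0 \<Longrightarrow> proj_pt (\<lambda>i. c * z i) = proj_pt z"
  unfolding proj_pt_def
  apply (auto simp: fun_eq_iff)
   apply (rule_tac x="ca*c" in exI, simp)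
  apply (rule_tac x="ca/c" in exI, simp)
  done

lemma proj_pt_eq: "proj_pt z = proj_pt z' \<Longrightarrow> \<exists>c. c \<noteq> 0 \<and> z' = (\<lambda>i. c * z i)"
proof -
  assume "proj_pt z = proj_pt z'"
  moreover have "z' \<in> proj_pt z'" unfolding proj_pt_def by (rule CollectI, rule exI[of _ 1], simp)
  ultimately show ?thesis unfolding proj_pt_def by auto
qed

lemma prod_powi_sum: "(c::complex) \<noteq> 0 \<Longrightarrow> (\<Prod>i\<in>A. c powi e i) = c powi (\<Sum>i\<in>A. e i)"
  by (induction A rule: infinite_finite_induct) (auto simp: power_int_add)

lemma Wvec_scale:
  assumes "(c::complex) \<noteq> 0" "(\<Sum>i\<le>m+1. e i) = 0"
  shows "Wvec m e (\<lambda>i. c * z i) = Wvec m e z"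
proof -
  have "Wvec m e (\<lambda>i. c * z i) = (\<Prod>i\<le>m+1. c powi e i) * Wvec m e z"
    unfolding Wvec_def by (simp add: power_int_mult_distrib prod.distrib)
  also have "\<dots> = Wvec m e z" by (simp only: prod_powi_sum[OF assms(1)] assms(2)) simp
  finally show ?thesis .
qed

lemma W_eq:
  assumes "z \<in> Pvecs m" "(\<Sum>i\<le>m+1. e i) = 0"
  shows "W m e (proj_pt z) = Wvec m e z"
  unfolding W_def
proof (rule the_equality)
  show "\<exists>z'\<in>Pvecs m. proj_pt z = proj_pt z' \<and> Wvec m e z = Wvec m e z'" using assms(1) by blast
next
  fix w assume "\<exists>z'\<in>Pvecs m. proj_pt z = proj_pt z' \<and> w = Wvec m e z'"
  then obtain z' where "proj_pt z = proj_pt z'" "w = Wvec m e z'" by blast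
  then obtain c where "c \<noteq> 0" "z' = (\<lambda>i. c * z i)" using proj_pt_eq by blast
  then show "w = Wvec m e z" using Wvec_scale[OF _ assms(2)] \<open>w = _\<close> by simp
qed

lemma dirD_ratio:
  assumes "z 0 \<noteq> 0"
  shows "dirD (\<lambda>w. w 1 / w 0) z v = (v 1 * z 0 - z 1 * v 0) / (z 0)^2"
  unfolding dirD_def
  apply (rule DERIV_imp_deriv)
  using assms by (auto intro!: derivative_eq_intros simp: field_simps power2_eq_square)

lemma dirD_Wvec:
  assumes "\<forall>i\<le>m+1. z i \<noteq> 0"
  shows "dirD (Wvec m e) z v = Wvec m e z * (\<Sum>i\<le>m+1. of_int (e i) * v i / z i)"
proof -
  have "((\<lambda>s. \<Prod>i\<le>m+1. (\<lambda>s. (z i + s * v i) powi e i) s) has_field_derivative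
     ((\<Prod>i\<le>m+1. (\<lambda>s. (z i + s * v i) powi e i) 0) *
      (\<Sum>i\<le>m+1. (v i * (of_int (e i) * (z i + 0 * v i) powi (e i - 1))) / (\<lambda>s. (z i + s * v i) powi e i) 0))) (at 0)"
    apply (rule has_field_derivative_prod')
    using assms by (auto intro!: derivative_eq_intros)
  moreover have "(\<Sum>i\<le>m+1. (v i * (of_int (e i) * (z i + 0 * v i) powi (e i - 1))) / (\<lambda>s. (z i + s * v i) powi e i) 0)
     = (\<Sum>i\<le>m+1. of_int (e i) * v i / z i)"
    apply (rule sum.cong, simp)
    using assms by (auto simp: power_int_diff field_simps)
  ultimately show ?thesis unfolding dirD_def Wvec_def
    by (intro DERIV_imp_deriv) simp
qed

definition dl :: "nat \<Rightarrow> nat \<Rightarrow> complex" where "dl j k = (if k = j then 1 else 0)"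

lemma sum_dl: "finite A \<Longrightarrow> (\<Sum>k\<in>A. f k * dl j k) = (if j \<in> A then f j else 0)"
  unfolding dl_def by (simp add: if_distrib cong: if_cong)

lemma crit_imp:
  assumes z: "z \<in> Pvecs d" and d: "d > 1" and T: "Wvec d a z \<noteq> 0" and anz: "\<forall>i\<le>d+1. a i \<noteq> 0"
    and cp: "crit_point d a z"
  shows "\<exists>\<mu>. \<mu> \<noteq> 0 \<and> (\<forall>i. 2 \<le> i \<and> i \<le> d+1 \<longrightarrow> \<mu> * z i = of_int (a i)) \<and> \<mu> * (z 0 + z 1) = of_int (a 0 + a 1)"
proof -
  have nz: "\<forall>i\<le>d+1. z i \<noteq> 0" using z unfolding Pvecs_def by auto
  obtain l m where lm: "(l, m) \<noteq> (0, 0)" and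
    H: "\<And>v. tangent d v \<Longrightarrow> l * dirD (\<lambda>w. w 1 / w 0) z v + m * dirD (Wvec d a) z v = 0"
    using cp unfolding crit_point_def by blast
  have nz0: "z 0 \<noteq> 0" using nz by simp
  define T where "T = Wvec d a z"
  define K where "K = m * T"
  have key: "l * ((dl i 1 - dl 2 1) * z 0 - z 1 * (dl i 0 - dl 2 0)) / (z 0)^2
      + K * (of_int (a i) / z i - of_int (a 2) / z 2) = 0" if i: "i \<le> d+1" for i
  proof -
    define v where "v = (\<lambda>k. dl i k - dl 2 k)"
    have tv: "tangent d v" unfolding tangent_def v_def
      using i d by (auto simp: sum_subtractf sum_dl[where f="\<lambda>_. 1", simplified] dl_def)
    have s: "(\<Sum>k\<le>d+1. of_int (a k) * v k / z k) = of_int (a i) / z i - of_int (a 2) / z 2"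
    proof -
      have "(\<Sum>k\<le>d+1. of_int (a k) * v k / z k) = (\<Sum>k\<le>d+1. (of_int (a k) / z k) * dl i k)
          - (\<Sum>k\<le>d+1. (of_int (a k) / z k) * dl 2 k)"
        unfolding v_def sum_subtractf[symmetric] by (rule sum.cong) (simp_all add: diff_divide_distrib right_diff_distrib)
      also have "\<dots> = of_int (a i) / z i - of_int (a 2) / z 2"
        using i d by (simp only: sum_dl[OF finite_atMost]) simp
      finally show ?thesis .
    qed
    have "l * dirD (\<lambda>w. w 1 / w 0) z v + m * dirD (Wvec d a) z v = 0" using H[OF tv] .
    then have "l * ((v 1 * z 0 - z 1 * v 0) / (z 0)^2) + m * (T * (of_int (a i) / z i - of_int (a 2) / z 2)) = 0"
      unfolding dirD_ratio[of z, OF nz0] dirD_Wvec[OF nz] s T_def .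
    then show ?thesis unfolding K_def v_def by (simp only: mult.assoc times_divide_eq_right)
  qed
  have k1: "l / z 0 + K * (of_int (a 1) / z 1 - of_int (a 2) / z 2) = 0"
    using key[of 1] nz by (simp add: dl_def power2_eq_square)
  have k0: "- l * z 1 / (z 0)^2 + K * (of_int (a 0) / z 0 - of_int (a 2) / z 2) = 0"
    using key[of 0] nz by (simp add: dl_def)
  have ki: "K * (of_int (a i) / z i - of_int (a 2) / z 2) = 0" if "2 < i" "i \<le> d+1" for i
    using key[OF that(2)] that by (simp add: dl_def)
  have K0: "K \<noteq> 0"
  proof
    assume "K = 0"
    then have "m = 0" using T unfolding K_def T_def by simp
    moreover have "l = 0" using k1 \<open>K = 0\<close> nz by simp
    ultimately show False using lm by simp
  qed
  define \<mu> where "\<mu> = of_int (a 2) / z 2"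
  have a2: "a 2 \<noteq> 0" using anz d by simp
  show ?thesis
  proof (intro exI conjI allI impI)
    show "\<mu> \<noteq> 0" unfolding \<mu>_def using nz d a2 by simp
  next
    fix i assume "2 \<le> i \<and> i \<le> d+1"
    then show "\<mu> * z i = of_int (a i)"
    proof (cases "i = 2")
      case True then show ?thesis unfolding \<mu>_def using nz d by simp
    next
      case False
      then have "of_int (a i) / z i - \<mu> = 0" using ki[of i] K0 \<open>2 \<le> i \<and> i \<le> d+1\<close> unfolding \<mu>_def by simp
      then show ?thesis using nz \<open>2 \<le> i \<and> i \<le> d+1\<close> by (simp add: field_simps)
    qed
  next
    have e1: "l / z 0 = - K * (of_int (a 1) / z 1 - \<mu>)" using k1 unfolding \<mu>_def by (simp add: algebra_simps)
    have e0: "(l / z 0) * (z 1 / z 0) = K * (of_int (a 0) / z 0 - \<mu>)" using k0 unfolding \<mu>_def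
      by (simp add: power2_eq_square algebra_simps)
    have "(- K * (of_int (a 1) / z 1 - \<mu>)) * (z 1 / z 0) = K * (of_int (a 0) / z 0 - \<mu>)"
      using e0 e1 by simp
    then have "K * ((of_int (a 0) / z 0 - \<mu>) + (of_int (a 1) / z 1 - \<mu>) * (z 1 / z 0)) = 0"
      by (simp add: algebra_simps)
    then have "(of_int (a 0) / z 0 - \<mu>) + (of_int (a 1) / z 1 - \<mu>) * (z 1 / z 0) = 0"
      using K0 by simp
    then have "z 0 * (of_int (a 0) + of_int (a 1)) = z 0 * (\<mu> * (z 0 + z 1))" using nz0 nz[rule_format, of 1]
      by (simp add: field_simps)
    then show "\<mu> * (z 0 + z 1) = of_int (a 0 + a 1)" using nz0 by simp
  qed
qed

lemma sum_split01: "(n::nat) \<ge> 1 \<Longrightarrow> (\<Sum>k\<le>n. f k) = f 0 + f 1 + (\<Sum>k=2..n. f k)"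
proof -
  assume "n \<ge> 1"
  have "{..n} = {0,1} \<union> {2..n}" using \<open>n \<ge> 1\<close> by auto
  then show ?thesis by (simp add: sum.union_disjoint add.assoc)
qed

lemma prod_split01: "(n::nat) \<ge> 1 \<Longrightarrow> (\<Prod>k\<le>n. f k) = f 0 * f 1 * (\<Prod>k=2..n. f k)"
proof -
  assume "n \<ge> 1"
  have "{..n} = {0,1} \<union> {2..n}" using \<open>n \<ge> 1\<close> by auto
  then show ?thesis by (simp add: prod.union_disjoint mult.assoc)
qed

lemma lin3: "x + y + X = (0::complex) \<Longrightarrow> X = -x - y"
  by (simp add: algebra_simps eq_neg_iff_add_eq_0)

lemma crit_norm:
  assumes z: "z \<in> Pvecs d" and d: "d > 1" and T: "Wvec d a z \<noteq> 0"
    and zi: "\<forall>i. 2 \<le> i \<and> i \<le> d+1 \<longrightarrow> z i = of_int (a i)"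
    and z01: "z 0 + z 1 = of_int (a 0 + a 1)"
  shows "crit_point d a z"
proof -
  have nz: "\<forall>i\<le>d+1. z i \<noteq> 0" using z unfolding Pvecs_def by auto
  have nz0: "z 0 \<noteq> 0" and nz1: "z 1 \<noteq> 0" using nz by auto
  define l where "l = z 0 * (1 - of_int (a 1) / z 1)"
  define m where "m = 1 / Wvec d a z"
  show ?thesis unfolding crit_point_def
  proof (intro exI conjI allI impI)
    show "(l, m) \<noteq> (0, 0)" using T unfolding m_def by simp
  next
    fix v assume tv: "tangent d v"
    have sv: "(\<Sum>k\<le>d+1. v k) = 0" using tv unfolding tangent_def by simp
    have h0: "(\<Sum>k\<le>d+1. v k) = v 0 + v 1 + (\<Sum>k=2..d+1. v k)" by (rule sum_split01) simp
    have sv2: "(\<Sum>k=2..d+1. v k) = - v 0 - v 1" by (rule lin3) (metis h0 sv)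
    have "(\<Sum>k\<le>d+1. of_int (a k) * v k / z k)
        = of_int (a 0) * v 0 / z 0 + of_int (a 1) * v 1 / z 1 + (\<Sum>k=2..d+1. of_int (a k) * v k / z k)"
      by (rule sum_split01) simp
    also have "(\<Sum>k=2..d+1. of_int (a k) * v k / z k) = (\<Sum>k=2..d+1. v k)"
      apply (rule sum.cong, simp)
      using zi nz by (auto simp: field_simps)
    finally have S: "(\<Sum>k\<le>d+1. of_int (a k) * v k / z k) = of_int (a 0) * v 0 / z 0 + of_int (a 1) * v 1 / z 1 - v 0 - v 1"
      using sv2 by simp
    have a0e: "of_int (a 0) = z 0 + z 1 - of_int (a 1)" using z01 by (simp add: algebra_simps)
    show "l * dirD (\<lambda>w. w 1 / w 0) z v + m * dirD (Wvec d a) z v = 0"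
      unfolding dirD_ratio[of z, OF nz0] dirD_Wvec[OF nz] S l_def m_def
      using T nz0 nz1 
      by (simp add: a0e field_simps power2_eq_square)
  qed
qed

lemma norm_equiv:
  assumes w: "w \<in> Pvecs d" and d: "d > 1"
    and wi: "\<forall>i. 2 \<le> i \<and> i \<le> d+1 \<longrightarrow> w i = of_int (a i)"
    and w01: "w 0 + w 1 = of_int (a 0 + a 1)" and n0: "a 0 + a 1 \<noteq> 0"
    and anz: "\<forall>i\<le>d+1. a i \<noteq> 0"
  shows "Wvec 1 (cvec a) (psi_vec w) = (-1) powi (cvec a 2) * Wvec d a w / qb d (bvec a)"
proof -
  define Pi where "Pi = (\<Prod>k=2..d+1. (of_int (a k) :: complex) powi a k)"
  define B where "B = (of_int (a 0 + a 1) :: complex)"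
  have B0: "B \<noteq> 0" unfolding B_def using n0 of_int_eq_0_iff by blast
  have Pi0: "Pi \<noteq> 0" unfolding Pi_def using anz by (auto simp: prod_zero_iff)
  have WA: "Wvec d a w = w 0 powi a 0 * w 1 powi a 1 * Pi"
    unfolding Wvec_def Pi_def
    apply (subst prod_split01, simp)
    using wi by (auto intro!: prod.cong)
  have "qb d (bvec a) = B powi (a 0 + a 1) * (\<Prod>i=1..d. (of_int (a (i+1)) :: complex) powi a (i+1))"
  proof -
    have "{..d} = insert 0 {1..d}" by auto
    then show ?thesis unfolding qb_def B_def by (simp add: bvec_def)
  qed
  also have "(\<Prod>i=1..d. (of_int (a (i+1)) :: complex) powi a (i+1)) = Pi"
  proof -
    have e: "{2..d+1} = {Suc 1..Suc d}" by simp
    show ?thesis unfolding Pi_def e prod.shift_bounds_cl_Suc_ivl by simp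
  qed
  finally have QB: "qb d (bvec a) = B powi (a 0 + a 1) * Pi" .
  have WC: "Wvec 1 (cvec a) (psi_vec w) = w 0 powi a 0 * w 1 powi a 1 * (- B) powi (- a 0 - a 1)"
    unfolding Wvec_def psi_vec_def cvec_def B_def using w01
    by (simp add: numeral_2_eq_2 mult.assoc)
  have mB: "(- B) powi (- a 0 - a 1) = (-1) powi (- a 0 - a 1) / B powi (a 0 + a 1)"
  proof -
    have "(- B) powi (- a 0 - a 1) = (-1) powi (- a 0 - a 1) * B powi (- a 0 - a 1)"
      using power_int_mult_distrib[of "-1" B "- a 0 - a 1"] by simp
    moreover have "B powi (- a 0 - a 1) = inverse (B powi (a 0 + a 1))"
      using power_int_minus[of B "a 0 + a 1"] by (simp add: algebra_simps)
    ultimately show ?thesis by (simp add: divide_inverse)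
  qed
  have c2: "cvec a 2 = - a 0 - a 1" unfolding cvec_def by simp
  show ?thesis unfolding WC WA QB mB c2 using B0 Pi0 by simp
qed

lemma scale_Pvecs: "z \<in> Pvecs m \<Longrightarrow> (c::complex) \<noteq> 0 \<Longrightarrow> (\<lambda>i. c * z i) \<in> Pvecs m"
  unfolding Pvecs_def mem_Collect_eq sum_distrib_left[symmetric] by simp

lemma psi_in: "w \<in> Pvecs d \<Longrightarrow> w 0 + w 1 \<noteq> 0 \<Longrightarrow> psi_vec w \<in> Pvecs 1"
proof -
  assume w: "w \<in> Pvecs d" and s: "w 0 + w 1 \<noteq> 0"
  have "w 0 \<noteq> 0" "w 1 \<noteq> 0" using w unfolding Pvecs_def by auto
  moreover have "\<forall>i\<le>1+1. psi_vec w i \<noteq> 0"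
  proof (intro allI impI)
    fix i :: nat assume "i \<le> 1+1"
    then have "i = 0 \<or> i = 1 \<or> i = 2" by auto
    moreover have "psi_vec w 2 \<noteq> 0"
    proof -
      have "psi_vec w 2 = -(w 0 + w 1)" by (simp add: psi_vec_def)
      then show ?thesis using s by (metis neg_equal_0_iff_equal)
    qed
    ultimately show "psi_vec w i \<noteq> 0" unfolding psi_vec_def using \<open>w 0 \<noteq> 0\<close> \<open>w 1 \<noteq> 0\<close> by auto
  qed
  moreover have "(\<Sum>i\<le>1+1. psi_vec w i) = 0" unfolding psi_vec_def by (simp add: numeral_2_eq_2)
  moreover have "\<forall>i>1+1. psi_vec w i = 0" unfolding psi_vec_def by auto
  ultimately show ?thesis unfolding Pvecs_def by blast
qed

theorem corollary3p23:
  fixes d p :: nat and a :: "nat \<Rightarrow> int" and t :: complex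
  assumes "d > 1"
    and "(\<Sum>i\<le>d+1. a i) = 0"
    and "\<forall>i\<le>d+1. a i \<noteq> 0"
    and "p \<ge> 1"
    and "\<forall>i\<le>d+1. i \<le> p \<longrightarrow> a i > 0"
    and "\<forall>i\<le>d+1. i > p \<longrightarrow> a i < 0"
    and "t \<noteq> 0"
  shows "crit_values d a t
           = Winv 1 (cvec a) ((-1) powi (cvec a 2) * t / qb d (bvec a))"
proof -
  note d = assms(1) and sa = assms(2) and anz = assms(3) and t0 = assms(7)
  have a0: "a 0 > 0" and a1: "a 1 > 0" using assms(4,5) by auto
  have n0: "a 0 + a 1 \<noteq> 0" using a0 a1 by simp
  define B where "B = (of_int (a 0 + a 1) :: complex)"
  have B0: "B \<noteq> 0" unfolding B_def using n0 of_int_eq_0_iff by blast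
  have sc: "(\<Sum>i\<le>1+1. cvec a i) = 0" by (simp add: cvec_def numeral_2_eq_2)
  define s where "s = (-1) powi (cvec a 2) * t / qb d (bvec a)"
  have qb0: "qb d (bvec a) \<noteq> 0" unfolding qb_def bvec_def using anz n0
    by (auto simp: prod_zero_iff)
  have m10: "((-1::complex) powi (cvec a 2)) \<noteq> 0" by simp
  show ?thesis unfolding s_def[symmetric]
  proof
    show "crit_values d a t \<subseteq> Winv 1 (cvec a) s"
    proof
      fix P assume "P \<in> crit_values d a t"
      then obtain z where P: "P = proj_pt (psi_vec z)" and z: "z \<in> Pvecs d"
        and F: "proj_pt z \<in> Fo d a t" and cp: "crit_point d a z"
        unfolding crit_values_def by blast
      have Wz: "Wvec d a z = t" using F W_eq[OF z sa] unfolding Fo_def Winv_def by simp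
      obtain \<mu> where mu0: "\<mu> \<noteq> 0" and mui: "\<forall>i. 2 \<le> i \<and> i \<le> d+1 \<longrightarrow> \<mu> * z i = of_int (a i)"
        and mu01: "\<mu> * (z 0 + z 1) = of_int (a 0 + a 1)"
        using crit_imp[OF z d _ anz cp] Wz t0 by blast
      define w where "w = (\<lambda>i. \<mu> * z i)"
      have w: "w \<in> Pvecs d" unfolding w_def using scale_Pvecs[OF z mu0] .
      have Ww: "Wvec d a w = t" unfolding w_def using Wvec_scale[OF mu0 sa] Wz by simp
      have wi: "\<forall>i. 2 \<le> i \<and> i \<le> d+1 \<longrightarrow> w i = of_int (a i)" using mui unfolding w_def by simp
      have w01: "w 0 + w 1 = of_int (a 0 + a 1)" using mu01 unfolding w_def by (simp add: distrib_left)
      have "psi_vec w = (\<lambda>i. \<mu> * psi_vec z i)" unfolding w_def psi_vec_def by (auto simp: fun_eq_iff algebra_simps)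
      then have P': "P = proj_pt (psi_vec w)" using P proj_pt_scale[OF mu0] by simp
      have "w 0 + w 1 \<noteq> 0" by (metis w01 B0 B_def)
      then have pw: "psi_vec w \<in> Pvecs 1" using psi_in[OF w] by simp
      have "W 1 (cvec a) P = Wvec 1 (cvec a) (psi_vec w)" unfolding P' by (rule W_eq[OF pw sc])
      also have "\<dots> = s" unfolding s_def norm_equiv[OF w d wi w01 n0 anz] Ww ..
      finally show "P \<in> Winv 1 (cvec a) s" unfolding Winv_def Pspace_def using P' pw by blast
    qed
  next
    show "Winv 1 (cvec a) s \<subseteq> crit_values d a t"
    proof
      fix P assume "P \<in> Winv 1 (cvec a) s"
      then obtain y where y: "y \<in> Pvecs 1" and P: "P = proj_pt y" and Wy: "W 1 (cvec a) P = s"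
        unfolding Winv_def Pspace_def by blast
      have y2: "y 2 \<noteq> 0" using y unfolding Pvecs_def by auto
      define k where "k = - B / y 2"
      have k0: "k \<noteq> 0" unfolding k_def using B0 y2 by simp
      define y' where "y' = (\<lambda>i. k * y i)"
      have y': "y' \<in> Pvecs 1" unfolding y'_def by (rule scale_Pvecs[OF y k0])
      have P': "P = proj_pt y'" unfolding y'_def P using proj_pt_scale[OF k0] by simp
      have Wy': "Wvec 1 (cvec a) y' = s" using Wy W_eq[OF y' sc] P' by simp
      have y'2: "y' 2 = - B" unfolding y'_def k_def using y2 by simp
      have "y' 0 + y' 1 + y' 2 = 0" using y' unfolding Pvecs_def by (simp add: numeral_2_eq_2)
      then have y'01: "y' 0 + y' 1 = B" using y'2 by (simp add: algebra_simps)
      have y'nz: "y' 0 \<noteq> 0" "y' 1 \<noteq> 0" using y' unfolding Pvecs_def by auto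
      have y'big: "\<forall>i>2. y' i = 0" using y' unfolding Pvecs_def by auto
      define w where "w = (\<lambda>i. if i = 0 then y' 0 else if i = 1 then y' 1
                          else if i \<le> d+1 then (of_int (a i) :: complex) else 0)"
      have wi: "\<forall>i. 2 \<le> i \<and> i \<le> d+1 \<longrightarrow> w i = of_int (a i)" unfolding w_def by auto
      have w01: "w 0 + w 1 = of_int (a 0 + a 1)" unfolding w_def using y'01 B_def by simp
      have w: "w \<in> Pvecs d"
      proof -
        have "(\<Sum>i\<le>d+1. w i) = w 0 + w 1 + (\<Sum>i=2..d+1. w i)" by (rule sum_split01) simp
        also have "(\<Sum>i=2..d+1. w i) = (\<Sum>i=2..d+1. of_int (a i))" using wi by (intro sum.cong) auto
        also have "w 0 + w 1 + \<dots> = of_int (\<Sum>i\<le>d+1. a i)"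
          unfolding w01 by (subst sum_split01[of "d+1" a]) simp_all
        finally have "(\<Sum>i\<le>d+1. w i) = 0" using sa by (metis of_int_0)
        moreover have "\<forall>i\<le>d+1. w i \<noteq> 0" unfolding w_def using y'nz anz by auto
        moreover have "\<forall>i>d+1. w i = 0" unfolding w_def by auto
        ultimately show ?thesis unfolding Pvecs_def by blast
      qed
      have psw: "psi_vec w = y'"
      proof
        fix i show "psi_vec w i = y' i"
        proof (cases "i > 2")
          case True then show ?thesis using y'big unfolding psi_vec_def by auto
        next
          case False
          then have "i = 0 \<or> i = 1 \<or> i = 2" by auto
          then show ?thesis unfolding psi_vec_def w_def using y'01 y'2 by auto
        qed
      qed
      have "s = (-1) powi (cvec a 2) * Wvec d a w / qb d (bvec a)"
        using Wy' norm_equiv[OF w d wi w01 n0 anz] psw by simp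
      then have Ww: "Wvec d a w = t" unfolding s_def using qb0 m10 by (simp add: field_simps)
      have cpw: "crit_point d a w" using crit_norm[OF w d _ wi w01] Ww t0 by simp
      have w0: "w 0 + w 1 \<noteq> 0" by (metis w01 B0 B_def)
      have "proj_pt w \<in> Pspace d" unfolding Pspace_def using w by blast
      moreover have "W d a (proj_pt w) = t" using W_eq[OF w sa] Ww by simp
      ultimately have Fw: "proj_pt w \<in> Fo d a t" unfolding Fo_def Winv_def using w w0 by blast
      have "P = proj_pt (psi_vec w)" using P' psw by simp
      then show "P \<in> crit_values d a t" unfolding crit_values_def using w cpw Fw by blast
    qed
  qed
qed

end
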